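(* Let $d=1$, $\hbar>0$, $M>0$, $x,x_0\in\mathbb{R}$, $t_0<t$, and let $m$ be a positive Borel measure on $\mathbb{R}$ with $\int_{\mathbb{R}}e^{C|\alpha|}dm(\alpha)<\infty$ for all $C>0$ and $m(\mathbb{R}\setminus\{0\})>0$. Then the power series in $g$ \[ \sum_{n=0}^\infty\frac1{n!}\Bigl(\frac{-ig(t-t_0)}{\hbar}\Bigr)^n\int_{[0,1]^n}\int_{\mathbb{R}^n}\exp\Bigl\{-\frac{\hbar}{2M}(t-t_0)\sum_{j,k=1}^n\alpha_j\alpha_k(\sigma_j\sigma_k-\sigma_j\wedge\sigma_k)\Bigr\}\exp\Bigl\{\sum_{j=1}^n\alpha_j\bigl[\sigma_jx+(1-\sigma_j)x_0\bigr]\Bigr\}\prod_{j=1}^ndm(\alpha_j)\,d^n\sigma \] diverges for every $g\neq0$.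
   Context: $\sigma_j\wedge\sigma_k=\min(\sigma_j,\sigma_k)$. This series is the formal perturbation series (normalized by the free kernel) obtained from the Schr\"odinger propagator with potential $gV(x)=g\int e^{\alpha x}dm(\alpha)$ by analytic continuation of the mass $M\mapsto iM$, formally solving the heat equation with potential $-igV$. *)

theory Defs
  imports "HOL-Analysis.Analysis"
begin

text \<open>The n-th coefficient (without the prefactor) of the perturbation series:
  integral over sigma in [0,1]^n (Lebesgue) and alpha in R^n (product of m).
  The integrand is a positive real, so it is integrated as a nonnegative
  (extended-real) integral; it may be infinite.  T stands for t - t0.\<close>
definition pert_coeff ::
  "real measure \<Rightarrow> real \<Rightarrow> real \<Rightarrow> real \<Rightarrow> real \<Rightarrow> real \<Rightarrow> nat \<Rightarrow> ennreal" where
  "pert_coeff m hbar M T x x0 n =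
     (\<integral>\<^sup>+ \<sigma>. (\<integral>\<^sup>+ \<alpha>.
         ennreal (exp (- (hbar / (2 * M)) * T *
                      (\<Sum>j<n. \<Sum>k<n. \<alpha> j * \<alpha> k * (\<sigma> j * \<sigma> k - min (\<sigma> j) (\<sigma> k))))
                 * exp (\<Sum>j<n. \<alpha> j * (\<sigma> j * x + (1 - \<sigma> j) * x0)))
       \<partial>(PiM {..<n} (\<lambda>_. m)))
       * indicator (PiE {..<n} (\<lambda>_. {0..1::real})) \<sigma>
     \<partial>(PiM {..<n} (\<lambda>_. lborel)))"

end

theory Submission imports Defs "HOL-Real_Asymp.Real_Asymp" begin

lemma term_bound:
  fixes a sg u v y z :: real
  assumes "a > 0" "sg * sg = 1" "a \<le> sg * y" "a \<le> sg * z"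
    "1/4 \<le> u" "u \<le> 3/4" "1/4 \<le> v" "v \<le> 3/4"
  shows "y * z * (u * v - min u v) \<le> - (a^2/16)"
proof -
  have "(sg * y) * (sg * z) = (sg * sg) * (y * z)" by (simp add: algebra_simps)
  hence yz: "y * z = (sg * y) * (sg * z)" using assms(2) by simp
  have "a * a \<le> (sg * y) * (sg * z)" using assms by (intro mult_mono) auto
  hence P: "a^2 \<le> y * z" unfolding power2_eq_square yz .
  have Q: "u* v - min u v \<le> -1/16"
  proof (cases "u \<le> v")
    case True
    hence "u* v - min u v = - (u * (1-v))" by (simp add: algebra_simps)
    moreover have "(1/4) * (1/4) \<le> u * (1-v)" using assms by (intro mult_mono) auto
    ultimately show ?thesis by simp
  next
    case False
    hence "u* v - min u v = - (v * (1-u))" by (simp add: algebra_simps)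
    moreover have "(1/4) * (1/4) \<le> v * (1-u)" using assms by (intro mult_mono) auto
    ultimately show ?thesis by simp
  qed
  have "y * z*(u* v - min u v) \<le> y * z*(-1/16)"
    using P Q assms(1) by (intro mult_left_mono) (auto intro: order_trans[of 0 "a^2"])
  also have "\<dots> \<le> a^2 * (-1/16)" using P by simp
  finally show ?thesis by simp
qed

lemma lin_bound:
  fixes y u x x0 b :: real
  assumes "\<bar>y\<bar> \<le> b" "0 \<le> u" "u \<le> 1"
  shows "- (b * (\<bar>x\<bar> + \<bar>x0\<bar>)) \<le> y * (u * x + (1 - u) * x0)"
proof -
  have "\<bar>u * x + (1 - u) * x0\<bar> \<le> \<bar>u * x\<bar> + \<bar>(1 - u) * x0\<bar>"
    by (rule abs_triangle_ineq)
  also have "\<dots> = u * \<bar>x\<bar> + (1 - u) * \<bar>x0\<bar>"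
    using assms by (simp add: abs_mult)
  also have "\<dots> \<le> \<bar>x\<bar> + \<bar>x0\<bar>"
  proof -
    have "u * \<bar>x\<bar> \<le> \<bar>x\<bar>" using assms by (intro mult_left_le_one_le) auto
    moreover have "(1 - u) * \<bar>x0\<bar> \<le> \<bar>x0\<bar>" using assms by (intro mult_left_le_one_le) auto
    ultimately show ?thesis by linarith
  qed
  finally have h: "\<bar>u * x + (1 - u) * x0\<bar> \<le> \<bar>x\<bar> + \<bar>x0\<bar>" .
  have "\<bar>y * (u * x + (1 - u) * x0)\<bar> \<le> b * (\<bar>x\<bar> + \<bar>x0\<bar>)"
    unfolding abs_mult using assms h by (intro mult_mono) auto
  thus ?thesis by linarith
qed

lemma integrand_bound:
  fixes a sg b hbar M T x x0 :: real and n :: nat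
  assumes "a > 0" "sg * sg = 1" "hbar > 0" "M > 0" "T > 0"
    and sig: "\<sigma> \<in> PiE {..<n} (\<lambda>_. {1/4..3/4::real})"
    and alp: "\<alpha> \<in> PiE {..<n} (\<lambda>_. {y. a \<le> sg * y \<and> sg * y \<le> b})"
  shows "exp (hbar/(2*M)*T*(a^2/16)*(real n)^2 - b*(\<bar>x\<bar>+\<bar>x0\<bar>)*real n) \<le>
     exp (- (hbar / (2 * M)) * T *
                      (\<Sum>j<n. \<Sum>k<n. \<alpha> j * \<alpha> k * (\<sigma> j * \<sigma> k - min (\<sigma> j) (\<sigma> k))))
                 * exp (\<Sum>j<n. \<alpha> j * (\<sigma> j * x + (1 - \<sigma> j) * x0))"
proof -
  have S: "\<And>j. j < n \<Longrightarrow> 1/4 \<le> \<sigma> j \<and> \<sigma> j \<le> 3/4" using sig by (auto simp: PiE_def Pi_def)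
  have A: "\<And>j. j < n \<Longrightarrow> a \<le> sg * \<alpha> j \<and> sg * \<alpha> j \<le> b" using alp by (auto simp: PiE_def Pi_def)
  have Q: "(\<Sum>j<n. \<Sum>k<n. \<alpha> j * \<alpha> k * (\<sigma> j * \<sigma> k - min (\<sigma> j) (\<sigma> k))) \<le> (\<Sum>j<n. \<Sum>k<n. - (a^2/16))"
    by (intro sum_mono term_bound[OF assms(1,2)]) (use S A in auto)
  have Qs: "(\<Sum>j<n. \<Sum>k<n. - (a^2/16::real)) = - (a^2/16) * (real n)^2"
    by (simp add: power2_eq_square)
  have c: "hbar / (2*M) * T > 0" using assms by simp
  have Q2: "hbar/(2*M)*T*(a^2/16)*(real n)^2 \<le> - (hbar / (2 * M)) * T *
                      (\<Sum>j<n. \<Sum>k<n. \<alpha> j * \<alpha> k * (\<sigma> j * \<sigma> k - min (\<sigma> j) (\<sigma> k)))"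
  proof -
    let ?S = "(\<Sum>j<n. \<Sum>k<n. \<alpha> j * \<alpha> k * (\<sigma> j * \<sigma> k - min (\<sigma> j) (\<sigma> k)))"
    have Qn: "(a^2/16)*(real n)^2 \<le> - ?S" using Q Qs by linarith
    have "hbar / (2*M) * T * ((a^2/16)*(real n)^2) \<le> hbar / (2*M) * T * (- ?S)"
      by (rule mult_left_mono[OF Qn]) (use c in simp)
    thus ?thesis by (simp add: algebra_simps)
  qed
  have sgn: "sg = 1 \<or> sg = -1" using assms(2) by (metis mult_cancel_left1 square_eq_1_iff)
  have babs: "\<And>j. j < n \<Longrightarrow> \<bar>\<alpha> j\<bar> \<le> b"
  proof -
    fix j assume "j < n"
    hence h: "a \<le> sg * \<alpha> j \<and> sg * \<alpha> j \<le> b" by (rule A)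
    from sgn show "\<bar>\<alpha> j\<bar> \<le> b" using h assms(1) by (elim disjE) auto
  qed
  have L: "(\<Sum>j<n. - (b * (\<bar>x\<bar> + \<bar>x0\<bar>))) \<le> (\<Sum>j<n. \<alpha> j * (\<sigma> j * x + (1 - \<sigma> j) * x0))"
  proof (intro sum_mono lin_bound)
    fix j assume j: "j \<in> {..<n}"
    show "\<bar>\<alpha> j\<bar> \<le> b" using babs j by simp
    show "0 \<le> \<sigma> j" using S[of j] j by simp
    show "\<sigma> j \<le> 1" using S[of j] j by simp
  qed
  have "hbar/(2*M)*T*(a^2/16)*(real n)^2 - b*(\<bar>x\<bar>+\<bar>x0\<bar>)*real n \<le>
     - (hbar / (2 * M)) * T *
                      (\<Sum>j<n. \<Sum>k<n. \<alpha> j * \<alpha> k * (\<sigma> j * \<sigma> k - min (\<sigma> j) (\<sigma> k)))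
     + (\<Sum>j<n. \<alpha> j * (\<sigma> j * x + (1 - \<sigma> j) * x0))"
    using Q2 L by (simp add: algebra_simps)
  hence "exp (hbar/(2*M)*T*(a^2/16)*(real n)^2 - b*(\<bar>x\<bar>+\<bar>x0\<bar>)*real n) \<le>
     exp (- (hbar / (2 * M)) * T *
                      (\<Sum>j<n. \<Sum>k<n. \<alpha> j * \<alpha> k * (\<sigma> j * \<sigma> k - min (\<sigma> j) (\<sigma> k)))
     + (\<Sum>j<n. \<alpha> j * (\<sigma> j * x + (1 - \<sigma> j) * x0)))"
    by (simp only: exp_le_cancel_iff)
  thus ?thesis by (simp only: exp_add)
qed


lemma coeff_lower:
  fixes m :: "real measure" and a sg b hbar M T x x0 :: real and n :: nat
  assumes fm: "finite_measure m" and sm: "sets m = sets borel"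
    and ha: "a > 0" and hs: "sg * sg = 1" and hh: "hbar > 0" and hM: "M > 0" and hT: "T > 0"
  defines "A \<equiv> {y::real. a \<le> sg * y \<and> sg * y \<le> b}"
  defines "E \<equiv> exp (hbar/(2*M)*T*(a^2/16)*(real n)^2 - b*(\<bar>x\<bar>+\<bar>x0\<bar>)*real n)"
  shows "ennreal E * emeasure m A ^ n * ennreal ((1/2)^n) \<le> pert_coeff m hbar M T x x0 n"
proof -
  interpret fin: finite_measure m by fact
  interpret pm: product_sigma_finite "\<lambda>_::nat. m" ..
  interpret pl: product_sigma_finite "\<lambda>_::nat. lborel" by standard
  have "closed A" unfolding A_def
    by (intro closed_Collect_conj closed_Collect_le) (auto intro: continuous_intros)
  hence Asets: "A \<in> sets m" unfolding sm by (rule borel_closed)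
  let ?P = "PiE {..<n} (\<lambda>_. A)"
  let ?B = "PiE {..<n} (\<lambda>_. {1/4..3/4::real})"
  have mP: "emeasure (PiM {..<n} (\<lambda>_. m)) ?P = emeasure m A ^ n"
    using pm.emeasure_PiM[of "{..<n}" "\<lambda>_. A"] Asets by simp
  have Psets: "?P \<in> sets (PiM {..<n} (\<lambda>_. m))"
    by (rule sets_PiM_I_finite) (use Asets in auto)
  have mB: "emeasure (PiM {..<n} (\<lambda>_. lborel)) ?B = ennreal ((1/2)^n)"
  proof -
    have h: "emeasure lborel {1/4..3/4::real} = ennreal (1/2)" by simp
    have "emeasure (PiM {..<n} (\<lambda>_. lborel)) ?B = (\<Prod>i\<in>{..<n}. emeasure lborel {1/4..3/4::real})"
      by (rule pl.emeasure_PiM) auto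
    also have "\<dots> = (\<Prod>i\<in>{..<n}. ennreal (1/2))" by (simp only: h)
    also have "\<dots> = ennreal (1/2) ^ n" by (simp only: prod_constant card_lessThan)
    also have "\<dots> = ennreal ((1/2) ^ n)" by (rule ennreal_power) simp
    finally show ?thesis .
  qed
  have Bsets: "?B \<in> sets (PiM {..<n} (\<lambda>_. lborel))"
    by (rule sets_PiM_I_finite) auto
  have inner: "ennreal E * emeasure m A ^ n \<le> (\<integral>\<^sup>+ \<alpha>.
         ennreal (exp (- (hbar / (2 * M)) * T *
                      (\<Sum>j<n. \<Sum>k<n. \<alpha> j * \<alpha> k * (\<sigma> j * \<sigma> k - min (\<sigma> j) (\<sigma> k))))
                 * exp (\<Sum>j<n. \<alpha> j * (\<sigma> j * x + (1 - \<sigma> j) * x0)))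
       \<partial>(PiM {..<n} (\<lambda>_. m)))" if \<sigma>: "\<sigma> \<in> ?B" for \<sigma>
  proof -
    have "ennreal E * emeasure m A ^ n = (\<integral>\<^sup>+ \<alpha>. ennreal E * indicator ?P \<alpha> \<partial>(PiM {..<n} (\<lambda>_. m)))"
      using nn_integral_cmult_indicator[OF Psets] mP by simp
    also have "\<dots> \<le> (\<integral>\<^sup>+ \<alpha>.
         ennreal (exp (- (hbar / (2 * M)) * T *
                      (\<Sum>j<n. \<Sum>k<n. \<alpha> j * \<alpha> k * (\<sigma> j * \<sigma> k - min (\<sigma> j) (\<sigma> k))))
                 * exp (\<Sum>j<n. \<alpha> j * (\<sigma> j * x + (1 - \<sigma> j) * x0)))
       \<partial>(PiM {..<n} (\<lambda>_. m)))"
    proof (rule nn_integral_mono)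
      fix \<alpha>
      show "ennreal E * indicator ?P \<alpha> \<le> ennreal (exp (- (hbar / (2 * M)) * T *
                      (\<Sum>j<n. \<Sum>k<n. \<alpha> j * \<alpha> k * (\<sigma> j * \<sigma> k - min (\<sigma> j) (\<sigma> k))))
                 * exp (\<Sum>j<n. \<alpha> j * (\<sigma> j * x + (1 - \<sigma> j) * x0)))"
      proof (cases "\<alpha> \<in> ?P")
        case True
        have "E \<le> exp (- (hbar / (2 * M)) * T *
                      (\<Sum>j<n. \<Sum>k<n. \<alpha> j * \<alpha> k * (\<sigma> j * \<sigma> k - min (\<sigma> j) (\<sigma> k))))
                 * exp (\<Sum>j<n. \<alpha> j * (\<sigma> j * x + (1 - \<sigma> j) * x0))"
          unfolding E_def by (rule integrand_bound[OF ha hs hh hM hT \<sigma>]) (use True in \<open>simp add: A_def\<close>)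
        then show ?thesis using True by (simp add: ennreal_leI)
      next
        case False
        then show ?thesis by simp
      qed
    qed
    finally show ?thesis .
  qed
  have "ennreal E * emeasure m A ^ n * ennreal ((1/2)^n) =
     (\<integral>\<^sup>+ \<sigma>. (ennreal E * emeasure m A ^ n) * indicator ?B \<sigma> \<partial>(PiM {..<n} (\<lambda>_. lborel)))"
    using nn_integral_cmult_indicator[OF Bsets] mB by simp
  also have "\<dots> \<le> pert_coeff m hbar M T x x0 n"
    unfolding pert_coeff_def
  proof (rule nn_integral_mono)
    fix \<sigma>
    show "(ennreal E * emeasure m A ^ n) * indicator ?B \<sigma> \<le> (\<integral>\<^sup>+ \<alpha>.
         ennreal (exp (- (hbar / (2 * M)) * T *
                      (\<Sum>j<n. \<Sum>k<n. \<alpha> j * \<alpha> k * (\<sigma> j * \<sigma> k - min (\<sigma> j) (\<sigma> k))))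
                 * exp (\<Sum>j<n. \<alpha> j * (\<sigma> j * x + (1 - \<sigma> j) * x0)))
       \<partial>(PiM {..<n} (\<lambda>_. m))) * indicator (PiE {..<n} (\<lambda>_. {0..1::real})) \<sigma>"
    proof (cases "\<sigma> \<in> ?B")
      case True
      have "\<sigma> \<in> PiE {..<n} (\<lambda>_. {0..1::real})"
        using True by (auto simp: PiE_def Pi_def)
      then show ?thesis using inner[OF True] True by simp
    next
      case False
      then show ?thesis by simp
    qed
  qed
  finally show ?thesis .
qed


lemma ev_big:
  fixes \<kappa> D :: real assumes "\<kappa> > 0" "D > 0"
  shows "eventually (\<lambda>n::nat. real n \<le> exp (\<kappa> * real n) * D) sequentially"
  using assms by real_asymp

lemma closed_slab: "closed {y::real. a \<le> sg * y \<and> sg * y \<le> b}"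
  by (intro closed_Collect_conj closed_Collect_le) (auto intro: continuous_intros)

theorem mainTheorem4:
  fixes m :: "real measure" and hbar M t t0 x x0 g :: real
  assumes "hbar > 0" and "M > 0" and "t0 < t"
    and "sets m = sets borel"
    and "\<forall>C>0. (\<integral>\<^sup>+ \<alpha>. ennreal (exp (C * \<bar>\<alpha>\<bar>)) \<partial>m) < \<infinity>"
    and "emeasure m (UNIV - {0}) > 0"
    and "g \<noteq> 0"
  shows "\<not> ((\<forall>n. pert_coeff m hbar M (t - t0) x x0 n < \<infinity>) \<and>
            summable (\<lambda>n. (1 / fact n) * ((- \<i> * complex_of_real g * complex_of_real (t - t0)) / complex_of_real hbar) ^ n
                           * complex_of_real (enn2real (pert_coeff m hbar M (t - t0) x x0 n))))"
proof
  assume H: "(\<forall>n. pert_coeff m hbar M (t - t0) x x0 n < \<infinity>) \<and>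
            summable (\<lambda>n. (1 / fact n) * ((- \<i> * complex_of_real g * complex_of_real (t - t0)) / complex_of_real hbar) ^ n
                           * complex_of_real (enn2real (pert_coeff m hbar M (t - t0) x x0 n)))"
  define T where "T = t - t0"
  have hT: "T > 0" using assms(3) by (simp add: T_def)
  have fm: "finite_measure m"
  proof (rule finite_measureI)
    have "emeasure m (space m) = (\<integral>\<^sup>+\<alpha>. 1 \<partial>m)" by simp
    also have "\<dots> \<le> (\<integral>\<^sup>+\<alpha>. ennreal (exp (1 * \<bar>\<alpha>\<bar>)) \<partial>m)"
      by (rule nn_integral_mono) simp
    also have "\<dots> < \<infinity>" using assms(5)[rule_format, of 1] by simp
    finally show "emeasure m (space m) \<noteq> \<infinity>" by simp
  qed
  interpret fin: finite_measure m by (rule fm)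
  define Aset where "Aset = (\<lambda>(sg::real) (k::nat). {y::real. 1/real (Suc k) \<le> sg * y \<and> sg * y \<le> real (Suc k)})"
  have Asets: "Aset sg k \<in> sets m" for sg k
    unfolding assms(4) Aset_def by (intro borel_closed closed_slab)
  have "\<exists>k sg. sg * sg = 1 \<and> emeasure m (Aset sg k) \<noteq> 0"
  proof (rule ccontr)
    assume "\<not> ?thesis"
    hence z: "\<And>k sg. sg * sg = 1 \<Longrightarrow> emeasure m (Aset sg k) = 0" by blast
    have U0: "emeasure m (\<Union>k. Aset 1 k \<union> Aset (-1) k) = 0"
    proof (rule emeasure_UN_eq_0)
      fix k
      show "emeasure m (Aset 1 k \<union> Aset (-1) k) = 0"
        using emeasure_Un_null_set[OF Asets[of 1 k], of "Aset (-1) k"] z[of 1 k] z[of "-1" k] Asets[of "-1" k]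
        by (simp add: null_sets_def)
      show "range (\<lambda>k. Aset 1 k \<union> Aset (-1) k) \<subseteq> sets m" using Asets by auto
    qed
    have sub: "UNIV - {0} \<subseteq> (\<Union>k. Aset 1 k \<union> Aset (-1) k)"
    proof
      fix y :: real assume "y \<in> UNIV - {0}"
      hence y0: "\<bar>y\<bar> > 0" by simp
      obtain k :: nat where k: "max \<bar>y\<bar> (1/\<bar>y\<bar>) < real k" using reals_Archimedean2 by blast
      have "\<bar>y\<bar> \<le> real (Suc k)" using k by simp
      moreover have "1/real (Suc k) \<le> \<bar>y\<bar>"
      proof -
        have "1/\<bar>y\<bar> < real (Suc k)" using k by simp
        hence "1 < real (Suc k) * \<bar>y\<bar>" using y0 by (simp add: divide_less_eq)
        thus ?thesis using y0 by (simp add: divide_le_eq mult.commute)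
      qed
      ultimately have "y \<in> Aset 1 k \<union> Aset (-1) k" by (cases "y \<ge> 0") (auto simp: Aset_def)
      thus "y \<in> (\<Union>k. Aset 1 k \<union> Aset (-1) k)" by blast
    qed
    have "(\<Union>k. Aset 1 k \<union> Aset (-1) k) \<in> sets m" using Asets by auto
    hence "emeasure m (UNIV - {0}) \<le> 0" using emeasure_mono[OF sub, of m] U0 by simp
    with assms(6) show False by simp
  qed
  then obtain k sg where hs: "sg * sg = 1" and mA0: "emeasure m (Aset sg k) \<noteq> 0" by blast
  define a where "a = 1/real (Suc k)"
  define b where "b = real (Suc k)"
  have ha: "a > 0" by (simp add: a_def)
  have Aeq: "Aset sg k = {y. a \<le> sg * y \<and> sg * y \<le> b}" by (simp add: Aset_def a_def b_def)
  define p where "p = measure m (Aset sg k)"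
  have mAp: "emeasure m (Aset sg k) = ennreal p" unfolding p_def by (rule fin.emeasure_eq_measure)
  have hp: "p > 0"
  proof -
    have "p \<noteq> 0" using mA0 mAp by auto
    moreover have "p \<ge> 0" unfolding p_def by simp
    ultimately show ?thesis by simp
  qed
  define \<kappa> where "\<kappa> = hbar/(2*M)*T*(a^2/16)"
  define \<beta> where "\<beta> = b*(\<bar>x\<bar>+\<bar>x0\<bar>)"
  define E where "E = (\<lambda>n::nat. exp (\<kappa>*(real n)^2 - \<beta>*real n))"
  define c where "c = (\<lambda>n. enn2real (pert_coeff m hbar M T x x0 n))"
  have hk: "\<kappa> > 0" unfolding \<kappa>_def using assms(1,2) hT ha by simp
  have cl: "E n * p^n * (1/2)^n \<le> c n" for n
  proof -
    have lo: "ennreal (E n) * emeasure m (Aset sg k)^n * ennreal((1/2)^n) \<le> pert_coeff m hbar M T x x0 n"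
      unfolding E_def \<kappa>_def \<beta>_def Aeq by (rule coeff_lower[OF fm assms(4) ha hs assms(1) assms(2) hT])
    have eq: "ennreal (E n) * emeasure m (Aset sg k)^n * ennreal((1/2)^n) = ennreal (E n * p^n * (1/2)^n)"
      using hp by (simp add: mAp ennreal_mult ennreal_power E_def)
    have fin: "pert_coeff m hbar M T x x0 n < \<infinity>" using H T_def by simp
    have "enn2real (ennreal (E n * p^n * (1/2)^n)) \<le> c n"
      unfolding c_def by (rule enn2real_mono) (use lo eq fin in auto)
    thus ?thesis using hp by (simp add: E_def)
  qed
  define z where "z = (- \<i> * complex_of_real g * complex_of_real (t - t0)) / complex_of_real hbar"
  define r where "r = \<bar>g\<bar> * T / hbar"
  have tt: "cmod (complex_of_real t - complex_of_real t0) = t - t0"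
  proof -
    have "cmod (complex_of_real (t - t0)) = t - t0" using assms(3) by (simp only: norm_of_real)
    thus ?thesis by (simp only: of_real_diff)
  qed
  have nz: "norm z = r" unfolding z_def r_def T_def using assms(1,3) tt by (simp add: norm_mult norm_divide)
  have hr: "r > 0" unfolding r_def using assms(1,7) hT by simp
  let ?f = "\<lambda>n. (1 / fact n) * z ^ n * complex_of_real (c n)"
  have sum: "summable ?f" using H[THEN conjunct2] unfolding z_def c_def T_def .
  have "?f \<longlonglongrightarrow> 0" by (rule summable_LIMSEQ_zero[OF sum])
  hence "(\<lambda>n. norm (?f n)) \<longlonglongrightarrow> 0" by (rule tendsto_norm_zero)
  hence ev1: "eventually (\<lambda>n. norm (?f n) < 1) sequentially" by (rule order_tendstoD(2)) simp
  have c0: "c n \<ge> 0" for n unfolding c_def by simp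
  have nf: "norm (?f n) = r^n / fact n * c n" for n
    using nz c0[of n] by (simp add: norm_mult norm_power norm_divide)
  define D where "D = r * p * exp (-\<beta>) / 2"
  have hD: "D > 0" unfolding D_def using hr hp by simp
  have key: "r^n / fact n * (E n * p^n * (1/2)^n) = (exp (\<kappa>*real n) * D)^n / fact n" for n
  proof -
    have "\<kappa>*(real n)^2 - \<beta>*real n = real n * (\<kappa>*real n + -\<beta>)" by (simp add: power2_eq_square algebra_simps)
    hence "E n = exp (real n * (\<kappa>*real n + -\<beta>))" by (simp add: E_def)
    also have "\<dots> = exp (\<kappa>*real n + -\<beta>) ^ n" by (rule exp_of_nat_mult)
    also have "\<dots> = (exp (\<kappa>*real n) * exp (-\<beta>)) ^ n" by (simp only: exp_add)
    finally have En: "E n = (exp (\<kappa>*real n) * exp (-\<beta>)) ^ n" .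
    show ?thesis unfolding En D_def by (simp add: power_mult_distrib power_divide mult_ac)
  qed
  have ev2: "eventually (\<lambda>n. 1 \<le> norm (?f n)) sequentially"
    using ev_big[OF hk hD]
  proof eventually_elim
    case (elim n)
    have "fact n \<le> real (n ^ n)" by (rule fact_le_power)
    also have "\<dots> = real n ^ n" by simp
    also have "\<dots> \<le> (exp (\<kappa>*real n) * D) ^ n" by (rule power_mono[OF elim]) simp
    finally have "fact n \<le> (exp (\<kappa>*real n) * D) ^ n" .
    hence "1 \<le> (exp (\<kappa>*real n) * D) ^ n / fact n" by (simp add: le_divide_eq)
    also have "\<dots> = r^n / fact n * (E n * p^n * (1/2)^n)" by (rule key[symmetric])
    also have "\<dots> \<le> r^n / fact n * c n" by (rule mult_left_mono[OF cl]) (use hr in simp)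
    also have "\<dots> = norm (?f n)" by (rule nf[symmetric])
    finally show ?case .
  qed
  have "eventually (\<lambda>n. False) sequentially"
    using ev1 ev2 by eventually_elim simp
  thus False by simp
qed

end
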